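(* Fix integers $N\ge 2$ and $K\ge 1$. For every $r\in\mathbb{N}^+$, the class $M^{\text{RESCAL}}_{2r+1}$ subsumes the class $M^{\text{TransE}}_r$, i.e. $\pi(\mathcal{M}^{\text{TransE}}_r)\subseteq \pi(\mathcal{M}^{\text{RESCAL}}_{2r+1})$.
   Context: There are $N$ entities and $K$ relations. A score-based model assigns a score $s_k(i,j)\in\mathbb{R}$ to each triple (subject $i$, relation $k$, object $j$), $i,j\in\{1,\dots,N\}$, $k\in\{1,\dots,K\}$; its scoring tensor $\mathcal{S}\in\mathbb{R}^{N\times N\times K}$ has frontal slices $\mathbf{S}_k$ with $[\mathbf{S}_k]_{ij}=s_k(i,j)$. For a real $N\times N$ matrix $\mathbf{S}$, $\pi(\mathbf{S})$ is the matrix of dense ranks: $\pi_{ij}(\mathbf{S})=1+$ (number of distinct values among the entries of $\mathbf{S}$ that are strictly larger than $s_{ij}$); so larger scores get smaller ranks, and $s_{ij}\le s_{i'j'}\iff \pi_{ij}(\mathbf{S})\ge\pi_{i'j'}(\mathbf{S})$. For a tensor, $\pi$ is applied to each frontal slice; for a set $X$, $\pi(X)=\{\pi(x):x\in X\}$. RESCAL of size $r$: parameters $\mathbf{A}\in\mathbb{R}^{N\times r}$ (rows $\mathbf{a}_i$) and $\mathbf{R}_1,\dots,\mathbf{R}_K\in\mathbb{R}^{r\times r}$, score $s_k(i,j)=\mathbf{a}_i^T\mathbf{R}_k\mathbf{a}_j$. TransE of size $r$: parameters $\mathbf{A}\in\mathbb{R}^{N\times r}$ (rows $\mathbf{a}_i$),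 $\mathbf{R}\in\mathbb{R}^{K\times r}$ (rows $\mathbf{r}_k$), score $s_k(i,j)=-\|\mathbf{a}_i+\mathbf{r}_k-\mathbf{a}_j\|_2^2$. For a model type $t$, $\mathcal{M}^t_r$ denotes the set of scoring tensors of all models of type $t$ and size $r$, and $\mathcal{M}^t=\bigcup_{r\in\mathbb{N}^+}\mathcal{M}^t_r$. A class $M^{t_2}$ subsumes $M^{t_1}$ if $\pi(\mathcal{M}^{t_1})\subseteq\pi(\mathcal{M}^{t_2})$ (and analogously for classes of fixed size). *)

theory Defs
  imports "HOL-Analysis.Analysis"
begin

text \<open>A scoring tensor is a function S i j k (subject i, object j, relation k), set to 0 outside
  the index range so that tensors are determined by their entries.\<close>

type_synonym tensor = "nat \<Rightarrow> nat \<Rightarrow> nat \<Rightarrow> real"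
type_synonym rank_tensor = "nat \<Rightarrow> nat \<Rightarrow> nat \<Rightarrow> nat"

definition restrict_tensor :: "nat \<Rightarrow> nat \<Rightarrow> tensor \<Rightarrow> tensor" where
  "restrict_tensor N K f = (\<lambda>i j k. if i < N \<and> j < N \<and> k < K then f i j k else 0)"

definition rescal_score :: "nat \<Rightarrow> (nat \<Rightarrow> nat \<Rightarrow> real) \<Rightarrow> (nat \<Rightarrow> nat \<Rightarrow> nat \<Rightarrow> real)
    \<Rightarrow> nat \<Rightarrow> nat \<Rightarrow> nat \<Rightarrow> real" where
  "rescal_score r A R i j k = (\<Sum>p<r. \<Sum>q<r. A i p * R k p q * A j q)"

definition rescal_class :: "nat \<Rightarrow> nat \<Rightarrow> nat \<Rightarrow> tensor set" where
  "rescal_class N K r = {restrict_tensor N K (rescal_score r A R) | A R. True}"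

definition transe_score :: "nat \<Rightarrow> (nat \<Rightarrow> nat \<Rightarrow> real) \<Rightarrow> (nat \<Rightarrow> nat \<Rightarrow> real)
    \<Rightarrow> nat \<Rightarrow> nat \<Rightarrow> nat \<Rightarrow> real" where
  "transe_score r A R i j k = - (\<Sum>p<r. (A i p + R k p - A j p)\<^sup>2)"

definition transe_class :: "nat \<Rightarrow> nat \<Rightarrow> nat \<Rightarrow> tensor set" where
  "transe_class N K r = {restrict_tensor N K (transe_score r A R) | A R. True}"

definition dense_rank :: "nat \<Rightarrow> nat \<Rightarrow> tensor \<Rightarrow> rank_tensor" where
  "dense_rank N K S = (\<lambda>i j k. if i < N \<and> j < N \<and> k < K then
       1 + card {v. (\<exists>i'<N. \<exists>j'<N. v = S i' j' k) \<and> v > S i j k} else 0)"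

definition rank_set :: "nat \<Rightarrow> nat \<Rightarrow> tensor set \<Rightarrow> rank_tensor set" where
  "rank_set N K X = dense_rank N K ` X"

end

theory Submission
  imports Defs
begin

lemma sum_trunc:
  fixes m n :: nat and f :: "nat \<Rightarrow> real"
  assumes "m \<le> n" "\<And>p. p \<ge> m \<Longrightarrow> f p = (0::real)"
  shows "(\<Sum>p<n. f p) = (\<Sum>p<m. f p)"
proof -
  have "(\<Sum>p<n. f p) = (\<Sum>p<m. f p) + (\<Sum>p\<in>{m..<n}. f p)"
    using assms(1) sum.atLeastLessThan_concat[where m=0 and n=m and p=n and g=f] by (simp add: lessThan_atLeast0)
  also have "(\<Sum>p\<in>{m..<n}. f p) = 0" using assms(2) by simp
  finally show ?thesis by simp
qed

definition embB :: "nat \<Rightarrow> (nat \<Rightarrow> nat \<Rightarrow> real) \<Rightarrow> nat \<Rightarrow> nat \<Rightarrow> real" where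
  "embB r A i p = (if p < r then A i p else if p = r then 1
     else if p = Suc r then (\<Sum>t<r. (A i t)\<^sup>2) else 0)"

definition relB :: "nat \<Rightarrow> (nat \<Rightarrow> nat \<Rightarrow> real) \<Rightarrow> nat \<Rightarrow> nat \<Rightarrow> nat \<Rightarrow> real" where
  "relB r R k p q = (if p < r \<and> q < r then (if p = q then 2 else 0)
     else if p < r \<and> q = r then - 2 * R k p
     else if p = r \<and> q < r then 2 * R k q
     else if p = r \<and> q = r then - (\<Sum>t<r. (R k t)\<^sup>2)
     else if p = Suc r \<and> q = r then -1
     else if p = r \<and> q = Suc r then -1 else 0)"

lemma score_eq:
  assumes "r \<ge> 1"
  shows "rescal_score (2*r+1) (embB r A) (relB r R) i j k = transe_score r A R i j k"
proof -
  let ?f = "\<lambda>p q. embB r A i p * relB r R k p q * embB r A j q"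
  have inner: "(\<Sum>q<2*r+1. ?f p q) = (\<Sum>q<Suc (Suc r). ?f p q)" for p
    by (rule sum_trunc) (use assms in \<open>auto simp: embB_def\<close>)
  have outer: "(\<Sum>p<2*r+1. \<Sum>q<Suc (Suc r). ?f p q) = (\<Sum>p<Suc (Suc r). \<Sum>q<Suc (Suc r). ?f p q)"
    by (rule sum_trunc) (use assms in \<open>auto simp: embB_def\<close>)
  have d: "(\<Sum>p<r. \<Sum>q<r. ?f p q) = 2 * (\<Sum>p<r. A i p * A j p)"
  proof -
    have "(\<Sum>p<r. \<Sum>q<r. ?f p q) = (\<Sum>p<r. \<Sum>q<r. (if q = p then 2 * A i p * A j p else 0))"
      by (intro sum.cong refl) (auto simp: embB_def relB_def)
    also have "\<dots> = 2 * (\<Sum>p<r. A i p * A j p)"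
      by (simp add: sum_distrib_left mult.assoc)
    finally show ?thesis .
  qed
  have e1: "(\<Sum>p<r. ?f p r) = - 2 * (\<Sum>p<r. A i p * R k p)"
    by (simp add: embB_def relB_def sum_distrib_left mult.commute mult.left_commute)
  have e2: "(\<Sum>q<r. ?f r q) = 2 * (\<Sum>q<r. R k q * A j q)"
    by (simp add: embB_def relB_def sum_distrib_left mult.commute mult.left_commute)
  have z1: "(\<Sum>p<r. ?f p (Suc r)) = 0" by (simp add: relB_def)
  have z2: "(\<Sum>q<r. ?f (Suc r) q) = 0" by (simp add: relB_def)
  have tr: "transe_score r A R i j k = - (\<Sum>p<r. (A i p)\<^sup>2) - (\<Sum>p<r. (A j p)\<^sup>2)
      - (\<Sum>p<r. (R k p)\<^sup>2) - 2 * (\<Sum>p<r. A i p * R k p) + 2 * (\<Sum>q<r. R k q * A j q)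
      + 2 * (\<Sum>p<r. A i p * A j p)"
    unfolding transe_score_def
    by (simp add: power2_eq_square algebra_simps sum.distrib sum_subtractf sum_distrib_left)
  show ?thesis
    unfolding rescal_score_def inner outer
    by (simp add: sum.distrib d e1 e2 z1 z2 tr) (simp add: embB_def relB_def algebra_simps)
qed

theorem theorem1:
  fixes N K r :: nat
  assumes "N \<ge> 2" and "K \<ge> 1" and "r \<ge> 1"
  shows "rank_set N K (transe_class N K r) \<subseteq> rank_set N K (rescal_class N K (2 * r + 1))"
proof
  fix x assume "x \<in> rank_set N K (transe_class N K r)"
  then obtain A R where x: "x = dense_rank N K (restrict_tensor N K (transe_score r A R))"
    unfolding rank_set_def transe_class_def by auto
  have "transe_score r A R = rescal_score (2*r+1) (embB r A) (relB r R)"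
    using score_eq[OF assms(3)] by (intro ext) simp
  then have "restrict_tensor N K (transe_score r A R) \<in> rescal_class N K (2 * r + 1)"
    unfolding rescal_class_def by auto
  then show "x \<in> rank_set N K (rescal_class N K (2 * r + 1))"
    unfolding rank_set_def x by blast
qed

end
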